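(* Let $\mathcal{D}$ be a $\{K_3,K_4\}$-decomposition of $K_{18}$ with $\alpha=13$, let $W$ be the set of vertices $x$ with $\alpha_x\ge 2$, and for $i\in\{0,1,2,3\}$ let $t_i$ be the number of copies of $K_3$ in $\mathcal{D}$ having exactly $i$ vertices in $W$. Then $(t_0,t_1,t_2,t_3)\neq(0,2,7,4)$.
   Context: A $\{K_3,K_4\}$-decomposition of $K_v$ is a collection of subgraphs, each isomorphic to $K_3$ or $K_4$, such that every edge of $K_v$ lies in exactly one of them. $\alpha$ is the number of copies of $K_3$ in the decomposition, and for a vertex $x$, $\alpha_x$ is the number of copies of $K_3$ in the decomposition containing $x$. *)

theory Defs
  imports Main
begin

text \<open>A K_3/K_4-decomposition of the complete graph on vertex set V: a set D of
  subgraphs, each a complete graph on a 3- or 4-subset of V (identified with its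
  vertex set), such that every edge (2-subset) of V lies in exactly one member of D.\<close>

definition K34_decomposition :: "'a set \<Rightarrow> 'a set set \<Rightarrow> bool" where
  "K34_decomposition V D \<longleftrightarrow>
     (\<forall>B\<in>D. B \<subseteq> V \<and> (card B = 3 \<or> card B = 4)) \<and>
     (\<forall>x\<in>V. \<forall>y\<in>V. x \<noteq> y \<longrightarrow> (\<exists>!B. B \<in> D \<and> {x, y} \<subseteq> B))"

definition triangles :: "'a set set \<Rightarrow> 'a set set" where
  "triangles D = {B \<in> D. card B = 3}"

definition alpha :: "'a set set \<Rightarrow> nat" where
  "alpha D = card (triangles D)"

definition alpha_at :: "'a set set \<Rightarrow> 'a \<Rightarrow> nat" where
  "alpha_at D x = card {B \<in> triangles D. x \<in> B}"

end

theory Submission imports Defs begin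

lemma dec1: "K34_decomposition V D \<Longrightarrow> \<forall>B\<in>D. B \<subseteq> V \<and> (card B = 3 \<or> card B = 4)"
  unfolding K34_decomposition_def by (rule conjunct1)
lemma dec2: "K34_decomposition V D \<Longrightarrow> \<forall>x\<in>V. \<forall>y\<in>V. x \<noteq> y \<longrightarrow> (\<exists>!B. B \<in> D \<and> {x, y} \<subseteq> B)"
  unfolding K34_decomposition_def by (rule conjunct2)
lemma dec_sub: "K34_decomposition V D \<Longrightarrow> B \<in> D \<Longrightarrow> B \<subseteq> V"
  using dec1 by blast
lemma dec_card: "K34_decomposition V D \<Longrightarrow> B \<in> D \<Longrightarrow> card B = 3 \<or> card B = 4"
  using dec1 by blast
lemma dec_fin: "K34_decomposition V D \<Longrightarrow> finite V \<Longrightarrow> finite D"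
proof -
  assume a: "K34_decomposition V D" "finite V"
  have "D \<subseteq> Pow V" using dec_sub[OF a(1)] by blast
  moreover have "finite (Pow V)" using a(2) by simp
  ultimately show ?thesis by (rule finite_subset)
qed

lemma dec_uniq:
  assumes "K34_decomposition V D" "B1 \<in> D" "B2 \<in> D" "x \<noteq> y" "{x,y} \<subseteq> B1" "{x,y} \<subseteq> B2"
  shows "B1 = B2"
proof -
  have xy: "x \<in> V" "y \<in> V" using dec_sub[OF assms(1,2)] assms(5) by auto
  have h: "\<exists>!B. B \<in> D \<and> {x, y} \<subseteq> B" using dec2[OF assms(1), rule_format, OF xy assms(4)] .
  from h show ?thesis
  proof (rule ex1E)
    fix B assume "B \<in> D \<and> {x, y} \<subseteq> B" and u: "\<forall>B'. B' \<in> D \<and> {x, y} \<subseteq> B' \<longrightarrow> B' = B"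
    have "B1 = B" using u assms(2,5) by simp
    moreover have "B2 = B" using u assms(3,6) by simp
    ultimately show ?thesis by simp
  qed
qed

lemma dec_ex:
  assumes "K34_decomposition V D" "x \<in> V" "y \<in> V" "x \<noteq> y"
  shows "\<exists>B\<in>D. {x,y} \<subseteq> B"
proof -
  have h: "\<exists>!B. B \<in> D \<and> {x, y} \<subseteq> B" using dec2[OF assms(1), rule_format, OF assms(2-4)] .
  from h show ?thesis
  proof (rule ex1E)
    fix B assume "B \<in> D \<and> {x, y} \<subseteq> B"
    then show ?thesis by blast
  qed
qed

lemma L0:
  assumes dec: "K34_decomposition V D" and fV: "finite V" and x: "x \<in> V" and S: "S \<subseteq> V"
  shows "(\<Sum>B\<in>{B\<in>D. x\<in>B}. card ((B - {x}) \<inter> S)) = card (S - {x})"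
proof -
  have fD: "finite D" using dec_fin[OF dec fV] .
  have eq: "S - {x} = (\<Union>B\<in>{B\<in>D. x\<in>B}. (B - {x}) \<inter> S)"
  proof
    show "S - {x} \<subseteq> (\<Union>B\<in>{B\<in>D. x\<in>B}. (B - {x}) \<inter> S)"
    proof
      fix y assume y: "y \<in> S - {x}"
      then obtain B where "B \<in> D" "{x,y} \<subseteq> B" using dec_ex[OF dec x, of y] S by auto
      then show "y \<in> (\<Union>B\<in>{B\<in>D. x\<in>B}. (B - {x}) \<inter> S)" using y by auto
    qed
  next
    show "(\<Union>B\<in>{B\<in>D. x\<in>B}. (B - {x}) \<inter> S) \<subseteq> S - {x}" by blast
  qed
  have fS: "finite S" using S fV by (rule finite_subset)
  have "card (S - {x}) = (\<Sum>B\<in>{B\<in>D. x\<in>B}. card ((B - {x}) \<inter> S))"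
    unfolding eq
  proof (rule card_UN_disjoint)
    show "finite {B \<in> D. x \<in> B}" using fD by simp
    show "\<forall>i\<in>{B \<in> D. x \<in> B}. finite ((i - {x}) \<inter> S)"
      using fS by simp
    show "\<forall>i\<in>{B \<in> D. x \<in> B}. \<forall>j\<in>{B \<in> D. x \<in> B}. i \<noteq> j \<longrightarrow> (i - {x}) \<inter> S \<inter> ((j - {x}) \<inter> S) = {}"
    proof (intro ballI impI)
      fix i j assume i: "i \<in> {B \<in> D. x \<in> B}" and j: "j \<in> {B \<in> D. x \<in> B}" and ij: "i \<noteq> j"
      show "(i - {x}) \<inter> S \<inter> ((j - {x}) \<inter> S) = {}"
      proof (rule ccontr)
        assume "(i - {x}) \<inter> S \<inter> ((j - {x}) \<inter> S) \<noteq> {}"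
        then obtain y where "y \<in> i" "y \<in> j" "y \<noteq> x" by blast
        then have "i = j" using dec_uniq[OF dec, of i j y x] i j by auto
        then show False using ij by simp
      qed
    qed
  qed
  then show ?thesis by simp
qed

lemma L1:
  assumes dec: "K34_decomposition V D" and fV: "finite V" and S: "S \<subseteq> V"
  shows "(\<Sum>B\<in>D. card (B \<inter> S) choose 2) = card S choose 2"
proof -
  have fD: "finite D" using dec_fin[OF dec fV] .
  have fS: "finite S" using S fV by (rule finite_subset)
  have eq: "{e. e \<subseteq> S \<and> card e = 2} = (\<Union>B\<in>D. {e. e \<subseteq> B \<inter> S \<and> card e = 2})"
  proof
    show "{e. e \<subseteq> S \<and> card e = 2} \<subseteq> (\<Union>B\<in>D. {e. e \<subseteq> B \<inter> S \<and> card e = 2})"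
    proof
      fix e assume e: "e \<in> {e. e \<subseteq> S \<and> card e = 2}"
      then obtain x y where xy: "e = {x,y}" "x \<noteq> y" by (auto simp: card_2_iff)
      then have "x \<in> V" "y \<in> V" using e S by auto
      then obtain B where "B \<in> D" "{x,y} \<subseteq> B" using dec_ex[OF dec] xy by blast
      then show "e \<in> (\<Union>B\<in>D. {e. e \<subseteq> B \<inter> S \<and> card e = 2})" using e xy by auto
    qed
  next
    show "(\<Union>B\<in>D. {e. e \<subseteq> B \<inter> S \<and> card e = 2}) \<subseteq> {e. e \<subseteq> S \<and> card e = 2}" by blast
  qed
  have "card {e. e \<subseteq> S \<and> card e = 2} = (\<Sum>B\<in>D. card {e. e \<subseteq> B \<inter> S \<and> card e = 2})"
    unfolding eq
  proof (rule card_UN_disjoint)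
    show "finite D" by (rule fD)
    show "\<forall>i\<in>D. finite {e. e \<subseteq> i \<inter> S \<and> card e = 2}"
    proof
      fix i assume "i \<in> D"
      have "{e. e \<subseteq> i \<inter> S \<and> card e = 2} \<subseteq> Pow S" by blast
      moreover have "finite (Pow S)" using fS by simp
      ultimately show "finite {e. e \<subseteq> i \<inter> S \<and> card e = 2}" by (rule finite_subset)
    qed
    show "\<forall>i\<in>D. \<forall>j\<in>D. i \<noteq> j \<longrightarrow> {e. e \<subseteq> i \<inter> S \<and> card e = 2} \<inter> {e. e \<subseteq> j \<inter> S \<and> card e = 2} = {}"
    proof (intro ballI impI)
      fix i j assume i: "i \<in> D" and j: "j \<in> D" and ij: "i \<noteq> j"
      show "{e. e \<subseteq> i \<inter> S \<and> card e = 2} \<inter> {e. e \<subseteq> j \<inter> S \<and> card e = 2} = {}"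
      proof (rule ccontr)
        assume "{e. e \<subseteq> i \<inter> S \<and> card e = 2} \<inter> {e. e \<subseteq> j \<inter> S \<and> card e = 2} \<noteq> {}"
        then obtain e where e: "e \<subseteq> i" "e \<subseteq> j" "card e = 2" by blast
        then obtain x y where xy: "e = {x,y}" "x \<noteq> y" by (auto simp: card_2_iff)
        then have "i = j" using dec_uniq[OF dec i j xy(2)] e by auto
        then show False using ij by simp
      qed
    qed
  qed
  moreover have "card {e. e \<subseteq> S \<and> card e = 2} = card S choose 2" using n_subsets[OF fS, of 2] by simp
  moreover have "\<And>B. card {e. e \<subseteq> B \<inter> S \<and> card e = 2} = card (B \<inter> S) choose 2"
  proof -
    fix B
    have "finite (B \<inter> S)" using fS by simp
    then show "card {e. e \<subseteq> B \<inter> S \<and> card e = 2} = card (B \<inter> S) choose 2" by (rule n_subsets)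
  qed
  ultimately show ?thesis by simp
qed

lemma L2:
  assumes "finite F" "finite S"
  shows "(\<Sum>x\<in>S. card {B\<in>F. x\<in>B}) = (\<Sum>B\<in>F. card (B \<inter> S))"
proof -
  have "(\<Sum>x\<in>S. card {B\<in>F. x\<in>B}) = (\<Sum>x\<in>S. \<Sum>B\<in>F. if x \<in> B then 1 else 0)"
  proof (rule sum.cong[OF refl])
    fix x show "card {B\<in>F. x\<in>B} = (\<Sum>B\<in>F. if x \<in> B then 1 else 0)"
      using sum.inter_filter[OF assms(1), of "\<lambda>_. 1::nat" "\<lambda>B. x \<in> B"] by simp
  qed
  also have "\<dots> = (\<Sum>B\<in>F. \<Sum>x\<in>S. if x \<in> B then 1 else 0)" by (rule sum.swap)
  also have "\<dots> = (\<Sum>B\<in>F. card (B \<inter> S))"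
  proof (rule sum.cong[OF refl])
    fix B show "(\<Sum>x\<in>S. if x \<in> B then 1 else 0) = card (B \<inter> S)"
    proof -
      have "(\<Sum>x\<in>S. if x \<in> B then 1 else 0) = card {x\<in>S. x \<in> B}"
        using sum.inter_filter[OF assms(2), of "\<lambda>_. 1::nat" "\<lambda>x. x \<in> B"] by simp
      moreover have "{x\<in>S. x \<in> B} = B \<inter> S" by blast
      ultimately show ?thesis by simp
    qed
  qed
  finally show ?thesis .
qed

lemma fiber_sum:
  fixes g :: "'a \<Rightarrow> nat" and f :: "nat \<Rightarrow> nat"
  assumes "finite F" "\<forall>B\<in>F. g B < n"
  shows "(\<Sum>B\<in>F. f (g B)) = (\<Sum>i<n. f i * card {B\<in>F. g B = i})"
proof -
  have "(\<Sum>B\<in>F. f (g B)) = (\<Sum>B\<in>F. \<Sum>i<n. if g B = i then f i else 0)"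
  proof (rule sum.cong[OF refl])
    fix B assume "B \<in> F"
    then have "g B \<in> {..<n}" using assms by auto
    then show "f (g B) = (\<Sum>i<n. if g B = i then f i else 0)"
      by (subst sum.delta') auto
  qed
  also have "\<dots> = (\<Sum>i<n. \<Sum>B\<in>F. if g B = i then f i else 0)" by (rule sum.swap)
  also have "\<dots> = (\<Sum>i<n. f i * card {B\<in>F. g B = i})"
  proof (rule sum.cong[OF refl])
    fix i show "(\<Sum>B\<in>F. if g B = i then f i else 0) = f i * card {B\<in>F. g B = i}"
      using sum.inter_filter[OF assms(1), of "\<lambda>_. f i" "\<lambda>B. g B = i"] by (simp add: mult.commute)
  qed
  finally show ?thesis .
qed

lemma sum4: "(\<Sum>i<(4::nat). h i) = h 0 + h 1 + h 2 + h (3::nat)"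
  by (simp add: eval_nat_numeral)

lemma le_choose: "(n::nat) \<le> 4 \<Longrightarrow> n \<le> 1 + (n choose 2)"
proof -
  assume "n \<le> 4"
  then have "n \<in> {0,1,2,3,4}" by auto
  then show ?thesis by (auto simp: choose_two)
qed

lemma eq_choose: "(n::nat) \<le> 4 \<Longrightarrow> n = 1 + (n choose 2) \<Longrightarrow> n = 1 \<or> n = 2"
proof -
  assume "n \<le> 4" "n = 1 + (n choose 2)"
  moreover have "n \<in> {0,1,2,3,4}" using \<open>n \<le> 4\<close> by auto
  ultimately show ?thesis by (auto simp: choose_two)
qed

lemma choose12: "(n::nat) = 1 \<or> n = 2 \<Longrightarrow> (n choose 2) = (if n = 2 then 1 else 0)"
  by (auto simp: choose_two)

lemma deg_vals: "2 * (a::nat) + 3 * b = 17 \<Longrightarrow> (a = 1 \<and> b = 5) \<or> (a = 4 \<and> b = 3) \<or> (a = 7 \<and> b = 1)"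
  by presburger

theorem mainTheorem15:
  fixes D :: "nat set set"
  assumes "K34_decomposition {0..<18} D"
    and "alpha D = 13"
  defines "W \<equiv> {x \<in> {0..<18::nat}. alpha_at D x \<ge> 2}"
  defines "t \<equiv> (\<lambda>i::nat. card {B \<in> triangles D. card (B \<inter> W) = i})"
  shows "(t 0, t 1, t 2, t 3) \<noteq> (0, 2, 7, 4)"
proof
  assume H: "(t 0, t 1, t 2, t 3) = (0, 2, 7, 4)"
  then have t0: "t 0 = 0" and t1: "t 1 = 2" and t2: "t 2 = 7" and t3: "t 3 = 4" by simp_all
  define V where "V = {0..<18::nat}"
  have dec: "K34_decomposition V D" using assms(1) V_def by simp
  have fV: "finite V" and cV: "card V = 18" by (simp_all add: V_def)
  have fD: "finite D" using dec_fin[OF dec fV] .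
  define tri where "tri = triangles D"
  define Q where "Q = {B\<in>D. card B = 4}"
  have tri_def': "tri = {B\<in>D. card B = 3}" by (simp add: tri_def triangles_def)
  have ftri: "finite tri" using fD by (simp add: tri_def')
  have fQ: "finite Q" using fD by (simp add: Q_def)
  have ctri: "card tri = 13" using assms(2) by (simp add: alpha_def tri_def)
  have DU: "D = tri \<union> Q" using dec_card[OF dec] by (auto simp: tri_def' Q_def)
  have disj: "tri \<inter> Q = {}" by (auto simp: tri_def' Q_def)
  have sub: "\<And>B. B\<in>D \<Longrightarrow> B \<subseteq> V" using dec_sub[OF dec] .
  have finB: "finite B" if "B \<in> D" for B using sub[OF that] fV by (rule finite_subset)
  define a where "a x = card {B\<in>tri. x\<in>B}" for x
  define b where "b x = card {B\<in>Q. x\<in>B}" for x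
  have a_alpha: "alpha_at D x = a x" for x by (simp add: alpha_at_def a_def tri_def)
  have W_eq: "W = {x\<in>V. a x \<ge> 2}" by (simp add: W_def V_def a_alpha)
  have WV: "W \<subseteq> V" by (auto simp: W_eq)
  have fW: "finite W" using WV fV by (rule finite_subset)
  define j where "j B = card (B \<inter> W)" for B
  have t_eq: "t i = card {B\<in>tri. j B = i}" for i by (simp add: t_def tri_def j_def)
  have jle: "j B \<le> card B" if "B \<in> D" for B
    unfolding j_def using finB[OF that] by (simp add: card_mono)

  have split_x: "(\<Sum>B\<in>{B\<in>D. x\<in>B}. f B) = (\<Sum>B\<in>{B\<in>tri. x\<in>B}. f B) + (\<Sum>B\<in>{B\<in>Q. x\<in>B}. f B)"
    for x and f :: "nat set \<Rightarrow> nat"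
  proof -
    have "{B\<in>D. x\<in>B} = {B\<in>tri. x\<in>B} \<union> {B\<in>Q. x\<in>B}" using DU by auto
    moreover have "{B\<in>tri. x\<in>B} \<inter> {B\<in>Q. x\<in>B} = {}" using disj by auto
    ultimately show ?thesis using ftri fQ by (simp add: sum.union_disjoint)
  qed
  have split_D: "(\<Sum>B\<in>D. f B) = (\<Sum>B\<in>tri. f B) + (\<Sum>B\<in>Q. f B)" for f :: "nat set \<Rightarrow> nat"
    using DU disj ftri fQ by (simp add: sum.union_disjoint)

  have deg: "2 * a x + 3 * b x = 17" if x: "x \<in> V" for x
  proof -
    have "(\<Sum>B\<in>{B\<in>D. x\<in>B}. card ((B - {x}) \<inter> V)) = card (V - {x})"
      using L0[OF dec fV x subset_refl] .
    also have "\<dots> = 17" using x cV fV by simp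
    finally have e: "(\<Sum>B\<in>{B\<in>tri. x\<in>B}. card ((B - {x}) \<inter> V)) + (\<Sum>B\<in>{B\<in>Q. x\<in>B}. card ((B - {x}) \<inter> V)) = 17"
      using split_x by simp
    have "(\<Sum>B\<in>{B\<in>tri. x\<in>B}. card ((B - {x}) \<inter> V)) = (\<Sum>B\<in>{B\<in>tri. x\<in>B}. 2)"
    proof (rule sum.cong[OF refl])
      fix B assume B: "B \<in> {B\<in>tri. x\<in>B}"
      then have BD: "B \<in> D" "card B = 3" "x \<in> B" by (auto simp: tri_def')
      then have "(B - {x}) \<inter> V = B - {x}" using sub by blast
      then show "card ((B - {x}) \<inter> V) = 2" using BD by (simp add: card_Diff_singleton)
    qed
    moreover have "(\<Sum>B\<in>{B\<in>Q. x\<in>B}. card ((B - {x}) \<inter> V)) = (\<Sum>B\<in>{B\<in>Q. x\<in>B}. 3)"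
    proof (rule sum.cong[OF refl])
      fix B assume B: "B \<in> {B\<in>Q. x\<in>B}"
      then have BD: "B \<in> D" "card B = 4" "x \<in> B" by (auto simp: Q_def)
      then have "(B - {x}) \<inter> V = B - {x}" using sub by blast
      then show "card ((B - {x}) \<inter> V) = 3" using BD by (simp add: card_Diff_singleton)
    qed
    ultimately show ?thesis using e by (simp add: a_def b_def)
  qed
  have abvals: "(a x = 1 \<and> b x = 5) \<or> (a x = 4 \<and> b x = 3) \<or> (a x = 7 \<and> b x = 1)" if "x \<in> V" for x
    using deg_vals[OF deg[OF that]] .

  have sV: "(\<Sum>x\<in>V. a x) = 39"
  proof -
    have "(\<Sum>x\<in>V. a x) = (\<Sum>B\<in>tri. card (B \<inter> V))" unfolding a_def by (rule L2[OF ftri fV])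
    also have "\<dots> = (\<Sum>B\<in>tri. 3)"
    proof (rule sum.cong[OF refl])
      fix B assume "B \<in> tri"
      then have "B \<in> D" "card B = 3" by (auto simp: tri_def')
      then show "card (B \<inter> V) = 3" using sub by (simp add: Int_absorb2)
    qed
    finally show ?thesis using ctri by simp
  qed
  have jlt: "\<forall>B\<in>tri. j B < 4"
  proof
    fix B assume "B \<in> tri"
    then have "B \<in> D" "card B = 3" by (auto simp: tri_def')
    then show "j B < 4" using jle by fastforce
  qed
  have sW: "(\<Sum>x\<in>W. a x) = 28"
  proof -
    have "(\<Sum>x\<in>W. a x) = (\<Sum>B\<in>tri. j B)" unfolding a_def j_def by (rule L2[OF ftri fW])
    also have "\<dots> = (\<Sum>i<4. i * card {B\<in>tri. j B = i})"
      using fiber_sum[OF ftri jlt, of "\<lambda>i. i"] by simp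
    also have "\<dots> = 28" unfolding sum4 using t0 t1 t2 t3 by (simp add: t_eq)
    finally show ?thesis .
  qed
  have aNW: "a x = 1" if "x \<in> V - W" for x using abvals[of x] that by (auto simp: W_eq)
  have bNW: "b x = 5" if "x \<in> V - W" for x using abvals[of x] that by (auto simp: W_eq)
  have cW: "card W = 7"
  proof -
    have "(\<Sum>x\<in>V. a x) = (\<Sum>x\<in>V - W. a x) + (\<Sum>x\<in>W. a x)" using sum.subset_diff[OF WV fV] .
    then have "(\<Sum>x\<in>V - W. a x) = 11" using sV sW by simp
    moreover have "(\<Sum>x\<in>V - W. a x) = card (V - W)" using aNW by simp
    ultimately have "card (V - W) = 11" by simp
    then show ?thesis using card_Diff_subset[OF fW WV] cV by simp
  qed
  have aW: "a x = 4" if "x \<in> W" for x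
  proof -
    have ge: "\<forall>x\<in>W. 4 \<le> a x"
    proof
      fix x assume "x \<in> W"
      then have "x \<in> V" "2 \<le> a x" by (auto simp: W_eq)
      then show "4 \<le> a x" using abvals[of x] by auto
    qed
    have "(\<Sum>x\<in>W. a x - 4) = (\<Sum>x\<in>W. a x) - (\<Sum>x\<in>W. 4)" using sum_subtractf_nat[of W "\<lambda>_. 4" a] ge by simp
    also have "\<dots> = 0" using sW cW by simp
    finally have "\<forall>x\<in>W. a x - 4 = 0" using fW by simp
    then show ?thesis using ge that by fastforce
  qed
  have bW: "b x = 3" if "x \<in> W" for x using abvals[of x] aW[OF that] that WV by auto

  have cQ: "card Q = 19"
  proof -
    have "(\<Sum>B\<in>D. card (B \<inter> V) choose 2) = card V choose 2" by (rule L1[OF dec fV subset_refl])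
    then have "(\<Sum>B\<in>tri. card (B \<inter> V) choose 2) + (\<Sum>B\<in>Q. card (B \<inter> V) choose 2) = 153"
      using split_D cV by (simp add: choose_two)
    moreover have "(\<Sum>B\<in>tri. card (B \<inter> V) choose 2) = (\<Sum>B\<in>tri. 3)"
    proof (rule sum.cong[OF refl])
      fix B assume "B \<in> tri"
      then have "B \<in> D" "card B = 3" by (auto simp: tri_def')
      then show "card (B \<inter> V) choose 2 = 3" using sub by (simp add: Int_absorb2 choose_two)
    qed
    moreover have "(\<Sum>B\<in>Q. card (B \<inter> V) choose 2) = (\<Sum>B\<in>Q. 6)"
    proof (rule sum.cong[OF refl])
      fix B assume "B \<in> Q"
      then have "B \<in> D" "card B = 4" by (auto simp: Q_def)
      then show "card (B \<inter> V) choose 2 = 6" using sub by (simp add: Int_absorb2 choose_two)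
    qed
    ultimately show ?thesis using ctri by simp
  qed
  have sQj2: "(\<Sum>B\<in>Q. j B choose 2) = 2"
  proof -
    have "(\<Sum>B\<in>D. card (B \<inter> W) choose 2) = card W choose 2" by (rule L1[OF dec fV WV])
    then have "(\<Sum>B\<in>tri. j B choose 2) + (\<Sum>B\<in>Q. j B choose 2) = 21"
      using split_D cW by (simp add: choose_two j_def)
    moreover have "(\<Sum>B\<in>tri. j B choose 2) = (\<Sum>i<4. (i choose 2) * card {B\<in>tri. j B = i})"
      using fiber_sum[OF ftri jlt, of "\<lambda>i. i choose 2"] by simp
    moreover have "\<dots> = 19" unfolding sum4 using t0 t1 t2 t3 by (simp add: t_eq choose_two)
    ultimately show ?thesis by simp
  qed
  have sQj: "(\<Sum>B\<in>Q. j B) = 21"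
  proof -
    have "(\<Sum>x\<in>W. b x) = (\<Sum>B\<in>Q. j B)" unfolding b_def j_def by (rule L2[OF fQ fW])
    moreover have "(\<Sum>x\<in>W. b x) = 21" using bW cW by simp
    ultimately show ?thesis by simp
  qed
  have jQ4: "j K \<le> 4" if "K \<in> Q" for K
  proof -
    have "K \<in> D" "card K = 4" using that by (auto simp: Q_def)
    then show ?thesis using jle by fastforce
  qed
  have jQ: "j K = 1 \<or> j K = 2" if "K \<in> Q" for K
  proof -
    have le: "\<forall>K\<in>Q. j K \<le> 1 + (j K choose 2)" using jQ4 le_choose by blast
    have "(\<Sum>K\<in>Q. (1 + (j K choose 2)) - j K) = (\<Sum>K\<in>Q. 1 + (j K choose 2)) - (\<Sum>K\<in>Q. j K)"
      using sum_subtractf_nat[of Q j "\<lambda>K. 1 + (j K choose 2)"] le by simp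
    also have "\<dots> = 0"
    proof -
      have "(\<Sum>K\<in>Q. 1 + (j K choose 2)) = (\<Sum>K\<in>Q. 1) + (\<Sum>K\<in>Q. j K choose 2)" by (rule sum.distrib)
      then have "(\<Sum>K\<in>Q. 1 + (j K choose 2)) = 21" using sQj2 cQ by simp
      then show ?thesis using sQj by simp
    qed
    finally have "\<forall>K\<in>Q. (1 + (j K choose 2)) - j K = 0" using fQ by simp
    then have "j K = 1 + (j K choose 2)" using le that by fastforce
    then show ?thesis using eq_choose jQ4[OF that] by blast
  qed
  define J where "J = {K\<in>Q. j K = 2}"
  have fJ: "finite J" using fQ by (simp add: J_def)
  have cJ: "card J = 2"
  proof -
    have "(\<Sum>K\<in>Q. j K choose 2) = (\<Sum>K\<in>Q. if j K = 2 then 1 else 0)"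
      using jQ choose12 by (intro sum.cong) auto
    also have "\<dots> = card J"
      using sum.inter_filter[OF fQ, of "\<lambda>_. 1::nat" "\<lambda>K. j K = 2"] by (simp add: J_def)
    finally show ?thesis using sQj2 by simp
  qed

  define T3 where "T3 = {B\<in>tri. j B = 3}"
  have key: "\<exists>w. w \<in> W \<and> w \<in> T \<and> card ({B\<in>tri. w\<in>B} - {T}) = 3 \<and> ({B\<in>tri. w\<in>B} - {T}) \<subseteq> T3"
    if T: "T \<in> tri" "j T = 1" for T
  proof -
    have TD: "T \<in> D" "card T = 3" using T by (auto simp: tri_def')
    have fT: "finite T" using finB[OF TD(1)] .
    have "card (T \<inter> W) = 1" using T(2) by (simp add: j_def)
    then obtain w where Tw: "T \<inter> W = {w}" by (rule card_1_singletonE)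
    have wW: "w \<in> W" "w \<in> T" using Tw by auto
    have wV: "w \<in> V" using wW WV by auto
    have "card T = card (T \<inter> W) + card (T - W)" using card_Int_Diff[OF fT] .
    then have "card (T - W) = 2" using TD(2) T(2) by (simp add: j_def)
    then obtain p q where pq: "T - W = {p,q}" "p \<noteq> q" by (auto simp: card_2_iff)
    have inJ: "\<exists>K\<in>J. y \<in> K" if y: "y \<in> T - W" for y
    proof -
      have yV: "y \<in> V" using y sub[OF TD(1)] by auto
      have yNW: "y \<in> V - W" using y yV by auto
      have ay: "a y = 1" using aNW[OF yNW] .
      have by5: "b y = 5" using bNW[OF yNW] .
      have triy: "{B\<in>tri. y\<in>B} = {T}"
      proof -
        have "card {B\<in>tri. y\<in>B} = 1" using ay by (simp add: a_def)
        then obtain B0 where B0: "{B\<in>tri. y\<in>B} = {B0}" by (rule card_1_singletonE)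
        have "T \<in> {B\<in>tri. y\<in>B}" using T(1) y by auto
        then show ?thesis using B0 by auto
      qed
      have "(\<Sum>B\<in>{B\<in>D. y\<in>B}. card ((B - {y}) \<inter> W)) = card (W - {y})"
        using L0[OF dec fV yV WV] .
      also have "\<dots> = 7" using yNW cW by simp
      finally have e: "(\<Sum>B\<in>{B\<in>tri. y\<in>B}. card ((B - {y}) \<inter> W)) + (\<Sum>B\<in>{B\<in>Q. y\<in>B}. card ((B - {y}) \<inter> W)) = 7"
        using split_x by simp
      have rw: "(B - {y}) \<inter> W = B \<inter> W" for B using yNW by auto
      have "(\<Sum>B\<in>{B\<in>Q. y\<in>B}. j B) = 6" using e triy T(2) by (simp add: rw j_def)
      have jge: "\<forall>B\<in>{B\<in>Q. y\<in>B}. 1 \<le> j B" using jQ by fastforce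
      have "(\<Sum>B\<in>{B\<in>Q. y\<in>B}. j B - 1) = (\<Sum>B\<in>{B\<in>Q. y\<in>B}. j B) - (\<Sum>B\<in>{B\<in>Q. y\<in>B}. 1)"
        using sum_subtractf_nat[of "{B\<in>Q. y\<in>B}" "\<lambda>_. 1" j] jge by simp
      also have "\<dots> = 1" using \<open>(\<Sum>B\<in>{B\<in>Q. y\<in>B}. j B) = 6\<close> by5 by (simp add: b_def)
      finally have "(\<Sum>B\<in>{B\<in>Q. y\<in>B}. j B - 1) \<noteq> 0" by simp
      then obtain K where K: "K \<in> {B\<in>Q. y\<in>B}" "j K - 1 \<noteq> 0"
        by (rule sum.not_neutral_contains_not_neutral)
      then have "j K = 2" using jQ by fastforce
      then show ?thesis using K by (auto simp: J_def)
    qed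
    obtain Kp where Kp: "Kp \<in> J" "p \<in> Kp" using inJ[of p] pq by auto
    obtain Kq where Kq: "Kq \<in> J" "q \<in> Kq" using inJ[of q] pq by auto
    have KpD: "Kp \<in> D" "card Kp = 4" using Kp by (auto simp: J_def Q_def)
    have KqD: "Kq \<in> D" "card Kq = 4" using Kq by (auto simp: J_def Q_def)
    have pqT: "p \<in> T" "q \<in> T" "p \<notin> W" "q \<notin> W" using pq(1) by blast+
    have "Kp \<noteq> Kq"
    proof
      assume "Kp = Kq"
      then have "{p,q} \<subseteq> Kp" using Kp Kq by auto
      moreover have "{p,q} \<subseteq> T" using pqT by auto
      ultimately have "Kp = T" using dec_uniq[OF dec KpD(1) TD(1) pq(2)] by blast
      then show False using KpD TD by simp
    qed
    have J_eq: "J = {Kp, Kq}"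
    proof -
      have "{Kp, Kq} \<subseteq> J" using Kp Kq by auto
      moreover have "card {Kp, Kq} = card J" using cJ \<open>Kp \<noteq> Kq\<close> by simp
      ultimately show ?thesis using card_subset_eq[OF fJ] by blast
    qed
    have wnotJ: "j K = 1" if K: "K \<in> Q" "w \<in> K" for K
    proof (rule ccontr)
      assume "j K \<noteq> 1"
      then have "K \<in> J" using jQ[OF K(1)] K(1) by (auto simp: J_def)
      then have "K = Kp \<or> K = Kq" using J_eq by auto
      then show False
      proof
        have KD: "K \<in> D" "card K = 4" using K(1) by (auto simp: Q_def)
        have KT: "K \<noteq> T" using KD TD by auto
        {
          fix z assume z: "z \<in> K" "z \<in> T" "z \<notin> W"
          have wz: "w \<noteq> z" using wW(1) z(3) by auto
          have c1: "{w, z} \<subseteq> K" using K(2) z(1) by simp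
          have c2: "{w, z} \<subseteq> T" using wW(2) z(2) by simp
          have "K = T" using dec_uniq[OF dec KD(1) TD(1) wz c1 c2] .
          then have False using KT by simp
        }
        note contra = this
        show False if "K = Kp" using contra[of p] that Kp(2) pqT by simp
        show False if "K = Kq" using contra[of q] that Kq(2) pqT by simp
      qed
    qed
    have rw: "card ((B - {w}) \<inter> W) = j B - 1" if "w \<in> B" for B
    proof -
      have "(B - {w}) \<inter> W = (B \<inter> W) - {w}" by blast
      moreover have "w \<in> B \<inter> W" using that wW by auto
      ultimately show ?thesis by (simp add: j_def card_Diff_singleton)
    qed
    have "(\<Sum>B\<in>{B\<in>D. w\<in>B}. card ((B - {w}) \<inter> W)) = card (W - {w})"
      using L0[OF dec fV wV WV] .
    also have "\<dots> = 6" using wW cW by simp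
    finally have e: "(\<Sum>B\<in>{B\<in>tri. w\<in>B}. card ((B - {w}) \<inter> W)) + (\<Sum>B\<in>{B\<in>Q. w\<in>B}. card ((B - {w}) \<inter> W)) = 6"
      using split_x by simp
    have "(\<Sum>B\<in>{B\<in>Q. w\<in>B}. card ((B - {w}) \<inter> W)) = 0"
      using rw wnotJ fQ by simp
    then have e2: "(\<Sum>B\<in>{B\<in>tri. w\<in>B}. card ((B - {w}) \<inter> W)) = 6" using e by simp
    define A where "A = {B\<in>tri. w\<in>B}"
    have fA: "finite A" using ftri by (simp add: A_def)
    have TA: "T \<in> A" using T(1) wW by (simp add: A_def)
    have cA: "card A = 4" using aW[OF wW(1)] by (simp add: A_def a_def)
    have "(\<Sum>B\<in>A. card ((B - {w}) \<inter> W)) = card ((T - {w}) \<inter> W) + (\<Sum>B\<in>A - {T}. card ((B - {w}) \<inter> W))"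
      using sum.remove[OF fA TA] .
    moreover have "card ((T - {w}) \<inter> W) = 0" using rw[OF wW(2)] T(2) by simp
    ultimately have e3: "(\<Sum>B\<in>A - {T}. card ((B - {w}) \<inter> W)) = 6" using e2 by (simp add: A_def)
    have cA': "card (A - {T}) = 3" using cA TA fA by (simp add: card_Diff_singleton)
    have le2: "\<forall>B\<in>A - {T}. card ((B - {w}) \<inter> W) \<le> 2"
    proof
      fix B assume B: "B \<in> A - {T}"
      then have "B \<in> D" "card B = 3" "w \<in> B" by (auto simp: A_def tri_def')
      then have "card (B - {w}) = 2" by (simp add: card_Diff_singleton)
      moreover have "card ((B - {w}) \<inter> W) \<le> card (B - {w})"
        using finB[OF \<open>B \<in> D\<close>] by (simp add: card_mono)
      ultimately show "card ((B - {w}) \<inter> W) \<le> 2" by simp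
    qed
    have "(\<Sum>B\<in>A - {T}. 2 - card ((B - {w}) \<inter> W)) = (\<Sum>B\<in>A - {T}. 2) - (\<Sum>B\<in>A - {T}. card ((B - {w}) \<inter> W))"
      using sum_subtractf_nat[of "A - {T}" "\<lambda>B. card ((B - {w}) \<inter> W)" "\<lambda>_. 2"] le2 by simp
    also have "\<dots> = 0" using e3 cA' by simp
    finally have all2: "\<forall>B\<in>A - {T}. 2 - card ((B - {w}) \<inter> W) = 0" using fA by simp
    have sub3: "A - {T} \<subseteq> T3"
    proof
      fix B assume B: "B \<in> A - {T}"
      then have BD: "B \<in> D" "card B = 3" "w \<in> B" "B \<in> tri" by (auto simp: A_def tri_def')
      have "2 - card ((B - {w}) \<inter> W) = 0" "card ((B - {w}) \<inter> W) \<le> 2" using all2 le2 B by auto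
      then have c2: "card ((B - {w}) \<inter> W) = 2" by simp
      have "card (B - {w}) = 2" using BD by (simp add: card_Diff_singleton)
      moreover have "finite (B - {w})" using finB[OF BD(1)] by simp
      ultimately have "(B - {w}) \<inter> W = B - {w}"
        using card_subset_eq[of "B - {w}" "(B - {w}) \<inter> W"] c2 by simp
      then have "B \<subseteq> W" using BD(3) wW(1) by blast
      then have "j B = 3" using BD(2) by (simp add: j_def Int_absorb2)
      then show "B \<in> T3" using BD(4) by (simp add: T3_def)
    qed
    show ?thesis using wW cA' sub3 by (auto simp: A_def)
  qed

  have "card {B\<in>tri. j B = 1} = 2" using t1 by (simp add: t_eq)
  then obtain T T' where TT: "{B\<in>tri. j B = 1} = {T, T'}" "T \<noteq> T'" by (auto simp: card_2_iff)
  have T: "T \<in> tri" "j T = 1" and T': "T' \<in> tri" "j T' = 1" using TT(1) by blast+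
  obtain w where w: "w \<in> W" "w \<in> T" "card ({B\<in>tri. w\<in>B} - {T}) = 3" "({B\<in>tri. w\<in>B} - {T}) \<subseteq> T3"
    using key[OF T] by blast
  obtain w' where w': "w' \<in> W" "w' \<in> T'" "card ({B\<in>tri. w'\<in>B} - {T'}) = 3" "({B\<in>tri. w'\<in>B} - {T'}) \<subseteq> T3"
    using key[OF T'] by blast
  show False
  proof (cases "w = w'")
    case True
    then have "T' \<in> {B\<in>tri. w\<in>B} - {T}" using T' w' TT(2) by auto
    then have "j T' = 3" using w(4) by (auto simp: T3_def)
    then show False using T' by simp
  next
    case False
    define A where "A = {B\<in>tri. w\<in>B} - {T}"
    define A' where "A' = {B\<in>tri. w'\<in>B} - {T'}"
    have fA: "finite A" "finite A'" using ftri by (simp_all add: A_def A'_def)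
    have "card (A \<inter> A') \<le> Suc 0"
    proof (subst card_le_Suc0_iff_eq)
      show "finite (A \<inter> A')" using fA by simp
      show "\<forall>B1\<in>A \<inter> A'. \<forall>B2\<in>A \<inter> A'. B1 = B2"
      proof (intro ballI)
        fix B1 B2 assume "B1 \<in> A \<inter> A'" "B2 \<in> A \<inter> A'"
        then have "B1 \<in> D" "B2 \<in> D" "{w, w'} \<subseteq> B1" "{w, w'} \<subseteq> B2"
          by (auto simp: A_def A'_def tri_def')
        then show "B1 = B2" using dec_uniq[OF dec _ _ False] by simp
      qed
    qed
    moreover have "card (A \<union> A') + card (A \<inter> A') = card A + card A'" using card_Un_Int[OF fA] by simp
    moreover have "card (A \<union> A') \<le> card T3"
    proof (rule card_mono)
      show "finite T3" using ftri by (simp add: T3_def)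
      show "A \<union> A' \<subseteq> T3" unfolding A_def A'_def using w(4) w'(4) by (rule Un_least)
    qed
    moreover have "card T3 = 4" using t3 by (simp add: t_eq T3_def)
    ultimately show False using w(3) w'(3) by (simp add: A_def A'_def)
  qed
qed

end
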